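(* Let $\mathcal F$ be a proper filter on $\omega$. The game $\mathfrak G(\mathcal F^+,[\omega]^{<\omega},\mathcal F^* )$ is dual to the game $\mathfrak G(\mathcal F,\omega,\mathcal F^+)$ (a player has a winning strategy in one iff the other player has one in the other). Consequently, in $\mathfrak G(\mathcal F^+,[\omega]^{<\omega},\mathcal F^* )$, player I has a winning strategy if and only if $\mathcal F$ is $\omega$-$+$-diagonalizable, and player II has a winning strategy if and only if $\mathcal F$ is not weakly Ramsey.
   Context: A filter on $\omega$ is a family $\mathcal F\subseteq\mathcal P(\omega)$ closed under finite intersections and supersets and containing all cofinite sets; it is proper if all its members are infinite. $\mathcal F^+=\{X:\omega\setminus X\notin\mathcal F\}$, $\mathcal F^*=\mathcal P(\omega)\setminus\mathcal F^+$. $X\subseteq^*Y$ means $X\setminus Y$ is finite. Game $\mathfrak G(\mathcal X,\omega,\mathcal Z)$: at each stage $k$, I chooses $X_k\in\mathcal X$ and II responds with $n_k\in X_k$; II wins if $\{n_k:k\in\omega\}\in\mathcal Z$. Game $\mathfrak G(\mathcal X,[\omega]^{<\omega},\mathcal Z)$: at each stage $k$, I chooses $X_k\in\mathcal X$ and II responds with a nonempty finite $s_k\subseteq X_k$; II wins if $\bigcup_k s_k\in\mathcal Z$. In each game I wins when II does not. A tree is a set $T$ of finite sequences of natural numbers containing the empty sequence and closed under initial segments; it is an $\mathcal F$-tree if for each $\bar s\in T$ there is $X_{\bar s}\in\mathcal F$ with $\bar s^\frown n\in T$ for all $n\in X_{\bar s}$; a branch (infinite sequence with all initial segments in $T$)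 is in $\mathcal F^+$ if its set of values is in $\mathcal F^+$. $\mathcal F$ is weakly Ramsey if every $\mathcal F$-tree has a branch in $\mathcal F^+$. $\mathcal F$ is $\omega$-$+$-diagonalizable if there are $X_n\in\mathcal F^+$ ($n\in\omega$) such that for every $Y\in\mathcal F$ there is $n$ with $X_n\subseteq^*Y$. *)

theory Defs
  imports Main
begin

definition is_filter :: "nat set set \<Rightarrow> bool" where
  "is_filter F \<longleftrightarrow>
     (\<forall>A B. A \<in> F \<and> B \<in> F \<longrightarrow> A \<inter> B \<in> F) \<and>
     (\<forall>A B. A \<in> F \<and> A \<subseteq> B \<longrightarrow> B \<in> F) \<and>
     (\<forall>A. finite (- A) \<longrightarrow> A \<in> F)"

definition proper_filter :: "nat set set \<Rightarrow> bool" where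
  "proper_filter F \<longleftrightarrow> is_filter F \<and> (\<forall>A\<in>F. infinite A)"

definition fplus :: "nat set set \<Rightarrow> nat set set" where
  "fplus F = {X. - X \<notin> F}"

definition fstar :: "nat set set \<Rightarrow> nat set set" where
  "fstar F = UNIV - fplus F"

text \<open>A generic infinite game: at stage k, I plays a move a_k in the set Xm,
  II answers with a move b_k satisfying R a_k b_k; II wins the play iff W b
  holds for the sequence b of II's moves.  A strategy for I maps the list of
  II's previous moves to I's next move; a strategy for II maps the list of I's
  moves so far (including the current one) to II's answer.\<close>

definition win_I :: "'a set \<Rightarrow> ('a \<Rightarrow> 'b \<Rightarrow> bool) \<Rightarrow> ((nat \<Rightarrow> 'b) \<Rightarrow> bool)
    \<Rightarrow> ('b list \<Rightarrow> 'a) \<Rightarrow> bool" where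
  "win_I Xm R W \<sigma> \<longleftrightarrow>
     (\<forall>h. (\<forall>k<length h. R (\<sigma> (take k h)) (h ! k)) \<longrightarrow> \<sigma> h \<in> Xm) \<and>
     (\<forall>b. (\<forall>k. R (\<sigma> (map b [0..<k])) (b k)) \<longrightarrow> \<not> W b)"

definition win_II :: "'a set \<Rightarrow> ('a \<Rightarrow> 'b \<Rightarrow> bool) \<Rightarrow> ((nat \<Rightarrow> 'b) \<Rightarrow> bool)
    \<Rightarrow> ('a list \<Rightarrow> 'b) \<Rightarrow> bool" where
  "win_II Xm R W \<tau> \<longleftrightarrow>
     (\<forall>h. h \<noteq> [] \<and> set h \<subseteq> Xm \<longrightarrow> R (last h) (\<tau> h)) \<and>
     (\<forall>a. (\<forall>k. a k \<in> Xm) \<longrightarrow> W (\<lambda>k. \<tau> (map a [0..<Suc k])))"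

text \<open>The game G(X, omega, Z): II answers with a natural number n_k in X_k.\<close>
definition I_wins_pt :: "nat set set \<Rightarrow> nat set set \<Rightarrow> bool" where
  "I_wins_pt X Z \<longleftrightarrow> (\<exists>\<sigma>. win_I X (\<lambda>A n. n \<in> A) (\<lambda>b. range b \<in> Z) \<sigma>)"

definition II_wins_pt :: "nat set set \<Rightarrow> nat set set \<Rightarrow> bool" where
  "II_wins_pt X Z \<longleftrightarrow> (\<exists>\<tau>. win_II X (\<lambda>A n. n \<in> A) (\<lambda>b. range b \<in> Z) \<tau>)"

text \<open>The game G(X, [omega]^<omega, Z): II answers with a nonempty finite subset of X_k.\<close>
definition I_wins_fin :: "nat set set \<Rightarrow> nat set set \<Rightarrow> bool" where
  "I_wins_fin X Z \<longleftrightarrow>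
     (\<exists>\<sigma>. win_I X (\<lambda>A s. s \<noteq> {} \<and> finite s \<and> s \<subseteq> A) (\<lambda>b. (\<Union>k. b k) \<in> Z) \<sigma>)"

definition II_wins_fin :: "nat set set \<Rightarrow> nat set set \<Rightarrow> bool" where
  "II_wins_fin X Z \<longleftrightarrow>
     (\<exists>\<tau>. win_II X (\<lambda>A s. s \<noteq> {} \<and> finite s \<and> s \<subseteq> A) (\<lambda>b. (\<Union>k. b k) \<in> Z) \<tau>)"

definition is_tree :: "nat list set \<Rightarrow> bool" where
  "is_tree T \<longleftrightarrow> [] \<in> T \<and> (\<forall>s\<in>T. \<forall>k. take k s \<in> T)"

definition F_tree :: "nat set set \<Rightarrow> nat list set \<Rightarrow> bool" where
  "F_tree F T \<longleftrightarrow> is_tree T \<and> (\<forall>s\<in>T. \<exists>X\<in>F. \<forall>n\<in>X. s @ [n] \<in> T)"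

definition branch :: "nat list set \<Rightarrow> (nat \<Rightarrow> nat) \<Rightarrow> bool" where
  "branch T b \<longleftrightarrow> (\<forall>k. map b [0..<k] \<in> T)"

definition weakly_Ramsey :: "nat set set \<Rightarrow> bool" where
  "weakly_Ramsey F \<longleftrightarrow>
     (\<forall>T. F_tree F T \<longrightarrow> (\<exists>b. branch T b \<and> range b \<in> fplus F))"

definition omega_plus_diagonalizable :: "nat set set \<Rightarrow> bool" where
  "omega_plus_diagonalizable F \<longleftrightarrow>
     (\<exists>X :: nat \<Rightarrow> nat set. (\<forall>n. X n \<in> fplus F) \<and>
        (\<forall>Y\<in>F. \<exists>n. finite (X n - Y)))"

end

theory Submission
  imports Defs "HOL-Library.Countable"
begin

definition acc :: "('s list \<Rightarrow> 'a \<Rightarrow> 's) \<Rightarrow> 'a list \<Rightarrow> 's list" where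
  "acc g xs = foldl (\<lambda>l x. l @ [g l x]) [] xs"

lemma acc_Nil[simp]: "acc g [] = []"
  by (simp add: acc_def)

lemma acc_snoc[simp]: "acc g (xs @ [x]) = acc g xs @ [g (acc g xs) x]"
  by (simp add: acc_def)

lemma acc_map: "acc g (map a [0..<k]) = map (\<lambda>i. g (acc g (map a [0..<i])) (a i)) [0..<k]"
  by (induction k) auto

lemma fstar_iff: "X \<in> fstar F \<longleftrightarrow> - X \<in> F"
  by (simp add: fstar_def fplus_def)

lemma fplus_iff: "X \<in> fplus F \<longleftrightarrow> - X \<notin> F"
  by (simp add: fplus_def)

lemma meet:
  assumes "is_filter F" "X \<in> fplus F" "Y \<in> F"
  shows "X \<inter> Y \<noteq> {}"
proof
  assume "X \<inter> Y = {}"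
  then have "Y \<subseteq> - X" by auto
  then have "- X \<in> F" using assms unfolding is_filter_def by blast
  then show False using assms(2) by (simp add: fplus_iff)
qed

lemma UNIV_F: "is_filter F \<Longrightarrow> UNIV \<in> F"
  unfolding is_filter_def by auto

lemma UNIV_plus: "proper_filter F \<Longrightarrow> UNIV \<in> fplus F"
  unfolding proper_filter_def fplus_iff by auto

lemma fplus_minus_finite:
  assumes "is_filter F" "X \<in> fplus F" "finite A"
  shows "X - A \<in> fplus F"
proof -
  have "- X \<notin> F" using assms(2) by (simp add: fplus_iff)
  have "- A \<in> F" using assms(1,3) unfolding is_filter_def by auto
  show ?thesis unfolding fplus_iff
  proof
    assume "- (X - A) \<in> F"
    then have "- (X - A) \<inter> - A \<in> F" using \<open>- A \<in> F\<close> assms(1) unfolding is_filter_def by blast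
    moreover have "- (X - A) \<inter> - A \<subseteq> - X" by auto
    ultimately have "- X \<in> F" using assms(1) unfolding is_filter_def by blast
    then show False using \<open>- X \<notin> F\<close> by simp
  qed
qed

lemma fplus_mono:
  assumes "is_filter F" "X \<in> fplus F" "X \<subseteq> Y" shows "Y \<in> fplus F"
  using assms unfolding fplus_iff is_filter_def
  by (metis Compl_subset_Compl_iff)

lemma fplus_not_fstar: "X \<in> fplus F \<longleftrightarrow> X \<notin> fstar F"
  by (simp add: fstar_def)

definition consis :: "('a list \<Rightarrow> 'a set) \<Rightarrow> 'a list \<Rightarrow> bool" where
  "consis \<sigma> l \<longleftrightarrow> (\<forall>k<length l. l ! k \<in> \<sigma> (take k l))"

lemma consis_Nil[simp]: "consis \<sigma> []"
  by (simp add: consis_def)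

lemma consis_snoc[simp]: "consis \<sigma> (l @ [x]) \<longleftrightarrow> consis \<sigma> l \<and> x \<in> \<sigma> l"
  unfolding consis_def
  by (auto simp: nth_append less_Suc_eq)

lemma consis_take: "consis \<sigma> l \<Longrightarrow> consis \<sigma> (take j l)"
  unfolding consis_def by (simp add: min_def)

lemma map_upt_Suc: "map a [0..<Suc k] = map a [0..<k] @ [a k]"
  by simp

lemma L1:
  assumes pf: "proper_filter F" and d: "omega_plus_diagonalizable F"
  shows "I_wins_fin (fplus F) (fstar F)"
proof -
  have filt: "is_filter F" using pf proper_filter_def by blast
  obtain X :: "nat \<Rightarrow> nat set" where Xp: "\<forall>n. X n \<in> fplus F" and Xd: "\<forall>Y\<in>F. \<exists>n. finite (X n - Y)"
    using d unfolding omega_plus_diagonalizable_def by blast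
  define \<sigma> where "\<sigma> = (\<lambda>h::nat set list. X (fst (prod_decode (length h))) - {..<length h})"
  have s1: "\<sigma> h \<in> fplus F" for h
    unfolding \<sigma>_def using fplus_minus_finite[OF filt] Xp by blast
  have s2: "\<not> (\<Union>k. b k) \<in> fstar F"
    if hb: "\<forall>k. b k \<noteq> {} \<and> finite (b k) \<and> b k \<subseteq> \<sigma> (map b [0..<k])" for b
  proof
    assume "(\<Union>k. b k) \<in> fstar F"
    then have "- (\<Union>k. b k) \<in> F" by (simp add: fstar_iff)
    then obtain n where "finite (X n - - (\<Union>k. b k))" using Xd by blast
    then obtain m where m: "\<forall>x \<in> X n - - (\<Union>k. b k). x < m"
      by (meson Max_ge le_imp_less_Suc)
    define k where "k = prod_encode (n, m)"
    have "m \<le> k" unfolding k_def by (rule le_prod_encode_2)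
    obtain x where x: "x \<in> b k" using hb by blast
    have "b k \<subseteq> X n - {..<k}" using hb[rule_format, of k] unfolding \<sigma>_def k_def by simp
    with x have "x \<in> X n" "k \<le> x" by auto
    moreover have "x \<in> (\<Union>k. b k)" using x by blast
    ultimately have "x \<in> X n - - (\<Union>k. b k)" by blast
    then have "x < m" using m by blast
    then show False using \<open>m \<le> k\<close> \<open>k \<le> x\<close> by linarith
  qed
  show ?thesis unfolding I_wins_fin_def win_I_def
    using s1 s2 by blast
qed

lemma L2:
  assumes pf: "proper_filter F" and w: "I_wins_fin (fplus F) (fstar F)"
  shows "omega_plus_diagonalizable F"
proof -
  have filt: "is_filter F" using pf proper_filter_def by blast
  obtain \<sigma> where ws: "win_I (fplus F) (\<lambda>A s. s \<noteq> {} \<and> finite s \<and> s \<subseteq> A) (\<lambda>b. (\<Union>k. b k) \<in> fstar F) \<sigma>"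
    using w unfolding I_wins_fin_def by blast
  have ws1: "\<forall>h. (\<forall>k<length h. h ! k \<noteq> {} \<and> finite (h ! k) \<and> h ! k \<subseteq> \<sigma> (take k h)) \<longrightarrow> \<sigma> h \<in> fplus F"
    and ws2: "\<forall>b. (\<forall>k. b k \<noteq> {} \<and> finite (b k) \<and> b k \<subseteq> \<sigma> (map b [0..<k])) \<longrightarrow> \<not> (\<Union>k. b k) \<in> fstar F"
    using ws unfolding win_I_def by auto
  note s1 = ws1[rule_format] and s2 = ws2[rule_format]
  define \<rho> where "\<rho> = (\<lambda>l. \<sigma> (map (\<lambda>m::nat. {m}) l))"
  have rp: "\<rho> l \<in> fplus F" if "consis \<rho> l" for l
    unfolding \<rho>_def
    by (rule s1) (use that in \<open>auto simp: consis_def \<rho>_def take_map\<close>)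
  define X :: "nat \<Rightarrow> nat set" where "X n = (if consis \<rho> (from_nat n) then \<rho> (from_nat n) else UNIV)" for n
  have Xp: "\<forall>n. X n \<in> fplus F" unfolding X_def using rp UNIV_plus[OF pf] by auto
  have Xd: "\<forall>Y\<in>F. \<exists>n. finite (X n - Y)"
  proof (rule ccontr)
    assume "\<not> ?thesis"
    then obtain Y where Y: "Y \<in> F" "\<And>n. infinite (X n - Y)" by blast
    define g :: "nat list \<Rightarrow> nat \<Rightarrow> nat" where "g l x = (SOME y. y \<in> \<rho> l - Y)" for l x
    define L where "L k = acc g (map (\<lambda>_. 0::nat) [0..<k])" for k
    define c where "c i = g (L i) 0" for i
    have Lc: "L k = map c [0..<k]" for k unfolding L_def c_def by (rule acc_map)
    have LS: "L (Suc k) = L k @ [c k]" for k unfolding Lc by simp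
    have key: "consis \<rho> (L k) \<and> c k \<in> \<rho> (L k) - Y" for k
    proof (induction k)
      case 0
      have "consis \<rho> (L 0)" by (simp add: L_def)
      then have "X (to_nat (L 0)) = \<rho> (L 0)" by (simp add: X_def)
      then have "\<rho> (L 0) - Y \<noteq> {}" using Y(2)[of "to_nat (L 0)"] by (metis finite.emptyI)
      then have "c 0 \<in> \<rho> (L 0) - Y" unfolding c_def g_def by (meson ex_in_conv someI_ex)
      then show ?case using \<open>consis \<rho> (L 0)\<close> by simp
    next
      case (Suc k)
      have "consis \<rho> (L (Suc k))" using Suc LS by simp
      then have "X (to_nat (L (Suc k))) = \<rho> (L (Suc k))" by (simp add: X_def)
      then have "\<rho> (L (Suc k)) - Y \<noteq> {}" using Y(2)[of "to_nat (L (Suc k))"] by (metis finite.emptyI)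
      then have "c (Suc k) \<in> \<rho> (L (Suc k)) - Y" unfolding c_def g_def by (meson ex_in_conv someI_ex)
      then show ?case using \<open>consis \<rho> (L (Suc k))\<close> by simp
    qed
    define b where "b k = {c k}" for k
    have "map b [0..<k] = map (\<lambda>m. {m}) (L k)" for k unfolding Lc b_def by simp
    then have "\<forall>k. b k \<noteq> {} \<and> finite (b k) \<and> b k \<subseteq> \<sigma> (map b [0..<k])"
      using key unfolding b_def \<rho>_def by auto
    then have "\<not> (\<Union>k. b k) \<in> fstar F" using ws2 by blast
    then have "- (\<Union>k. b k) \<notin> F" by (simp add: fstar_iff)
    moreover have "Y \<subseteq> - (\<Union>k. b k)" using key unfolding b_def by auto
    ultimately show False using Y(1) filt unfolding is_filter_def by blast
  qed
  show ?thesis unfolding omega_plus_diagonalizable_def using Xp Xd by blast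
qed

lemma L3:
  assumes pf: "proper_filter F" and w: "I_wins_fin (fplus F) (fstar F)"
  shows "II_wins_pt F (fplus F)"
proof -
  have filt: "is_filter F" using pf proper_filter_def by blast
  obtain \<sigma> where ws: "win_I (fplus F) (\<lambda>A s. s \<noteq> {} \<and> finite s \<and> s \<subseteq> A) (\<lambda>b. (\<Union>k. b k) \<in> fstar F) \<sigma>"
    using w unfolding I_wins_fin_def by blast
  have ws1: "\<forall>h. (\<forall>k<length h. h ! k \<noteq> {} \<and> finite (h ! k) \<and> h ! k \<subseteq> \<sigma> (take k h)) \<longrightarrow> \<sigma> h \<in> fplus F"
    and ws2: "\<forall>b. (\<forall>k. b k \<noteq> {} \<and> finite (b k) \<and> b k \<subseteq> \<sigma> (map b [0..<k])) \<longrightarrow> \<not> (\<Union>k. b k) \<in> fstar F"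
    using ws unfolding win_I_def by auto
  note s1 = ws1[rule_format] and s2 = ws2[rule_format]
  define \<rho> where "\<rho> = (\<lambda>l. \<sigma> (map (\<lambda>m::nat. {m}) l))"
  have rp: "\<rho> l \<in> fplus F" if "consis \<rho> l" for l
    unfolding \<rho>_def
    by (rule s1) (use that in \<open>auto simp: consis_def \<rho>_def take_map\<close>)
  define g :: "nat list \<Rightarrow> nat set \<Rightarrow> nat" where "g ns Y = (SOME n. n \<in> \<rho> ns \<inter> Y)" for ns Y
  have gk: "g ns Y \<in> \<rho> ns \<inter> Y" if "consis \<rho> ns" "Y \<in> F" for ns Y
  proof -
    have "\<rho> ns \<inter> Y \<noteq> {}" using meet[OF filt rp[OF that(1)] that(2)] .
    then show ?thesis unfolding g_def by (meson ex_in_conv someI_ex)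
  qed
  have inv: "set Ys \<subseteq> F \<Longrightarrow> consis \<rho> (acc g Ys)" for Ys
  proof (induction Ys rule: rev_induct)
    case Nil then show ?case by simp
  next
    case (snoc Y Ys)
    have YF: "Y \<in> F" and YsF: "set Ys \<subseteq> F" using snoc.prems by auto
    have c: "consis \<rho> (acc g Ys)" using snoc.IH YsF by blast
    have "g (acc g Ys) Y \<in> \<rho> (acc g Ys)" using gk[OF c YF] by blast
    then show ?case using c by simp
  qed
  define \<tau> where "\<tau> h = last (acc g h)" for h
  have t1: "\<tau> h \<in> last h" if "h \<noteq> [] \<and> set h \<subseteq> F" for h
  proof -
    have hne: "h \<noteq> []" using that by blast
    obtain ys y where h: "h = ys @ [y]" using hne by (metis append_butlast_last_id)
    have ysF: "set ys \<subseteq> F" and yF: "y \<in> F" using that h by auto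
    have "\<tau> h = g (acc g ys) y" unfolding \<tau>_def h by simp
    then show ?thesis using gk[OF inv[OF ysF] yF] h by simp
  qed
  have t2: "range (\<lambda>k. \<tau> (map a [0..<Suc k])) \<in> fplus F" if a: "\<forall>k. a k \<in> F" for a
  proof -
    define d where "d k = g (acc g (map a [0..<k])) (a k)" for k
    have ad: "acc g (map a [0..<k]) = map d [0..<k]" for k unfolding d_def by (rule acc_map)
    have td: "\<tau> (map a [0..<Suc k]) = d k" for k unfolding \<tau>_def map_upt_Suc acc_snoc d_def by simp
    have sF: "set (map a [0..<k]) \<subseteq> F" for k using a by auto
    define b where "b k = {d k}" for k
    have "map b [0..<k] = map (\<lambda>m. {m}) (acc g (map a [0..<k]))" for k unfolding ad b_def by simp
    then have "\<forall>k. b k \<noteq> {} \<and> finite (b k) \<and> b k \<subseteq> \<sigma> (map b [0..<k])"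
      using gk[OF inv[OF sF] a[rule_format]] unfolding b_def \<rho>_def d_def by auto
    then have "\<not> (\<Union>k. b k) \<in> fstar F" using ws2 by blast
    moreover have "(\<Union>k. b k) = range (\<lambda>k. \<tau> (map a [0..<Suc k]))" unfolding td b_def by auto
    ultimately show ?thesis by (simp add: fplus_not_fstar)
  qed
  show ?thesis unfolding II_wins_pt_def win_II_def using t1 t2 by blast
qed

lemma L4:
  assumes pf: "proper_filter F" and w: "II_wins_pt F (fplus F)"
  shows "I_wins_fin (fplus F) (fstar F)"
proof -
  have filt: "is_filter F" using pf proper_filter_def by blast
  obtain \<tau> where t1: "\<And>h. h \<noteq> [] \<and> set h \<subseteq> F \<Longrightarrow> \<tau> h \<in> last h"
    and t2: "\<And>a. \<forall>k. a k \<in> F \<Longrightarrow> range (\<lambda>k. \<tau> (map a [0..<Suc k])) \<in> fplus F"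
    using w unfolding II_wins_pt_def win_II_def by blast
  define XX where "XX Ys = (\<lambda>Y. \<tau> (Ys @ [Y])) ` F" for Ys
  define g :: "nat set list \<Rightarrow> nat set \<Rightarrow> nat set" where
    "g Ys s = (SOME Y. Y \<in> F \<and> (s \<inter> XX Ys \<noteq> {} \<longrightarrow> \<tau> (Ys @ [Y]) \<in> s))" for Ys s
  have gF: "g Ys s \<in> F \<and> (s \<inter> XX Ys \<noteq> {} \<longrightarrow> \<tau> (Ys @ [g Ys s]) \<in> s)" for Ys s
  proof -
    have "\<exists>Y. Y \<in> F \<and> (s \<inter> XX Ys \<noteq> {} \<longrightarrow> \<tau> (Ys @ [Y]) \<in> s)"
    proof (cases "s \<inter> XX Ys = {}")
      case True then show ?thesis using UNIV_F[OF filt] by blast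
    next
      case False then show ?thesis unfolding XX_def by blast
    qed
    then show ?thesis unfolding g_def by (rule someI_ex)
  qed
  have setF: "set (acc g h) \<subseteq> F" for h
    by (induction h rule: rev_induct) (use gF in auto)
  have XXp: "XX Ys \<in> fplus F" if "set Ys \<subseteq> F" for Ys
    unfolding fplus_iff
  proof
    assume c: "- XX Ys \<in> F"
    then have "\<tau> (Ys @ [- XX Ys]) \<in> - XX Ys" using t1[of "Ys @ [- XX Ys]"] that by simp
    moreover have "\<And>Y. Y \<in> F \<Longrightarrow> \<tau> (Ys @ [Y]) \<in> XX Ys" unfolding XX_def by blast
    then have "\<tau> (Ys @ [- XX Ys]) \<in> XX Ys" using c by blast
    ultimately show False by blast
  qed
  define \<sigma> where "\<sigma> h = XX (acc g h)" for h
  have s1: "\<sigma> h \<in> fplus F" for h unfolding \<sigma>_def using XXp setF by blast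
  have s2: "\<not> (\<Union>k. b k) \<in> fstar F"
    if hb: "\<forall>k. b k \<noteq> {} \<and> finite (b k) \<and> b k \<subseteq> \<sigma> (map b [0..<k])" for b
  proof -
    define a where "a k = g (acc g (map b [0..<k])) (b k)" for k
    have ab: "acc g (map b [0..<k]) = map a [0..<k]" for k unfolding a_def by (rule acc_map)
    have aF: "\<forall>k. a k \<in> F" unfolding a_def using gF by blast
    have "\<tau> (map a [0..<Suc k]) \<in> b k" for k
    proof -
      have "b k \<inter> XX (map a [0..<k]) \<noteq> {}" using hb[rule_format, of k] unfolding \<sigma>_def ab by auto
      then show ?thesis using gF[of "acc g (map b [0..<k])" "b k"] unfolding map_upt_Suc a_def[of k] ab
        by simp
    qed
    then have "range (\<lambda>k. \<tau> (map a [0..<Suc k])) \<subseteq> (\<Union>k. b k)" by blast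
    then have "(\<Union>k. b k) \<in> fplus F" using fplus_mono[OF filt t2[OF aF]] by blast
    then show ?thesis by (simp add: fplus_not_fstar)
  qed
  show ?thesis unfolding I_wins_fin_def win_I_def using s1 s2 by blast
qed

lemma L6:
  assumes pf: "proper_filter F" and w: "I_wins_pt F (fplus F)"
  shows "\<not> weakly_Ramsey F"
proof
  assume wr: "weakly_Ramsey F"
  obtain \<sigma> where s1: "\<And>h. (\<forall>k<length h. h ! k \<in> \<sigma> (take k h)) \<Longrightarrow> \<sigma> h \<in> F"
    and s2: "\<And>b. (\<forall>k. b k \<in> \<sigma> (map b [0..<k])) \<Longrightarrow> \<not> range b \<in> fplus F"
    using w unfolding I_wins_pt_def win_I_def by blast
  define T where "T = {l. consis \<sigma> l}"
  have "is_tree T" unfolding is_tree_def T_def using consis_take by auto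
  moreover have "\<forall>s\<in>T. \<exists>X\<in>F. \<forall>n\<in>X. s @ [n] \<in> T"
    unfolding T_def using s1 unfolding consis_def[symmetric] by auto
  ultimately have "F_tree F T" unfolding F_tree_def by blast
  then obtain b where b: "branch T b" "range b \<in> fplus F" using wr unfolding weakly_Ramsey_def by blast
  have "b k \<in> \<sigma> (map b [0..<k])" for k
    using b(1) unfolding branch_def T_def by (metis mem_Collect_eq consis_snoc map_upt_Suc)
  then show False using s2 b(2) by blast
qed

lemma L7:
  assumes pf: "proper_filter F" and nw: "\<not> weakly_Ramsey F"
  shows "II_wins_fin (fplus F) (fstar F)"
proof -
  have filt: "is_filter F" using pf proper_filter_def by blast
  obtain T where T: "F_tree F T" and nb: "\<And>b. branch T b \<Longrightarrow> range b \<notin> fplus F"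
    using nw unfolding weakly_Ramsey_def by blast
  define g :: "nat list \<Rightarrow> nat set \<Rightarrow> nat" where "g t X = (SOME n. n \<in> X \<and> t @ [n] \<in> T)" for t X
  have gT: "g t X \<in> X \<and> t @ [g t X] \<in> T" if "t \<in> T" "X \<in> fplus F" for t X
  proof -
    have Tsucc: "\<forall>s\<in>T. \<exists>X\<in>F. \<forall>n\<in>X. s @ [n] \<in> T" using T unfolding F_tree_def by (rule conjunct2)
    from Tsucc that(1) have "\<exists>X\<in>F. \<forall>n\<in>X. t @ [n] \<in> T" by (rule bspec)
    then obtain Z where Z: "Z \<in> F" "\<forall>n\<in>Z. t @ [n] \<in> T" by (rule bexE)
    have "X \<inter> Z \<noteq> {}" using meet[OF filt that(2) Z(1)] .
    then have "\<exists>n. n \<in> X \<and> t @ [n] \<in> T" using Z(2) by blast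
    then show ?thesis unfolding g_def by (rule someI_ex)
  qed
  have accT: "set xs \<subseteq> fplus F \<Longrightarrow> acc g xs \<in> T" for xs
  proof (induction xs rule: rev_induct)
    case Nil then show ?case using T unfolding F_tree_def is_tree_def by simp
  next
    case (snoc x xs)
    have xsF: "set xs \<subseteq> fplus F" and xF: "x \<in> fplus F" using snoc.prems by auto
    have "acc g xs \<in> T" using snoc.IH xsF by blast
    then have "acc g xs @ [g (acc g xs) x] \<in> T" using gT xF by blast
    then show ?case by simp
  qed
  define \<tau> where "\<tau> h = {g (acc g (butlast h)) (last h)}" for h
  have t1: "\<tau> h \<noteq> {} \<and> finite (\<tau> h) \<and> \<tau> h \<subseteq> last h" if "h \<noteq> [] \<and> set h \<subseteq> fplus F" for h
  proof -
    have b: "set (butlast h) \<subseteq> fplus F" using that by (meson in_set_butlastD subset_iff)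
    have l: "last h \<in> fplus F" using that by (meson last_in_set subsetD)
    have "g (acc g (butlast h)) (last h) \<in> last h" using gT[OF accT[OF b] l] by blast
    then show ?thesis unfolding \<tau>_def by simp
  qed
  have t2: "(\<Union>k. \<tau> (map a [0..<Suc k])) \<in> fstar F" if a: "\<forall>k. a k \<in> fplus F" for a
  proof -
    define c where "c k = g (acc g (map a [0..<k])) (a k)" for k
    have ac: "acc g (map a [0..<k]) = map c [0..<k]" for k unfolding c_def by (rule acc_map)
    have tc: "\<tau> (map a [0..<Suc k]) = {c k}" for k unfolding \<tau>_def map_upt_Suc c_def by simp
    have "branch T c" unfolding branch_def
    proof
      fix k
      have "set (map a [0..<k]) \<subseteq> fplus F" using a by auto
      then show "map c [0..<k] \<in> T" using accT ac by metis
    qed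
    then have "range c \<notin> fplus F" by (rule nb)
    moreover have "(\<Union>k. \<tau> (map a [0..<Suc k])) = range c" unfolding tc by auto
    ultimately show ?thesis by (simp add: fplus_not_fstar)
  qed
  have "win_II (fplus F) (\<lambda>A s. s \<noteq> {} \<and> finite s \<and> s \<subseteq> A) (\<lambda>b. (\<Union>k. b k) \<in> fstar F) \<tau>"
    unfolding win_II_def
  proof (rule conjI; intro allI impI)
    fix h assume "h \<noteq> [] \<and> set h \<subseteq> fplus F"
    then show "\<tau> h \<noteq> {} \<and> finite (\<tau> h) \<and> \<tau> h \<subseteq> last h" by (rule t1)
  next
    fix a :: "nat \<Rightarrow> nat set" assume "\<forall>k. a k \<in> fplus F"
    then show "(\<Union>k. \<tau> (map a [0..<Suc k])) \<in> fstar F" by (rule t2)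
  qed
  then show ?thesis unfolding II_wins_fin_def by blast
qed

lemma L8:
  assumes pf: "proper_filter F" and w: "II_wins_fin (fplus F) (fstar F)"
  shows "I_wins_pt F (fplus F)"
proof -
  have filt: "is_filter F" using pf proper_filter_def by blast
  obtain \<tau> where ws: "win_II (fplus F) (\<lambda>A s. s \<noteq> {} \<and> finite s \<and> s \<subseteq> A) (\<lambda>b. (\<Union>k. b k) \<in> fstar F) \<tau>"
    using w unfolding II_wins_fin_def by blast
  have ws1: "\<forall>h. h \<noteq> [] \<and> set h \<subseteq> fplus F \<longrightarrow> \<tau> h \<noteq> {} \<and> finite (\<tau> h) \<and> \<tau> h \<subseteq> last h"
    and ws2: "\<forall>a. (\<forall>k. a k \<in> fplus F) \<longrightarrow> (\<Union>k. \<tau> (map a [0..<Suc k])) \<in> fstar F"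
    using ws unfolding win_II_def by auto
  have t1: "\<tau> h \<noteq> {} \<and> finite (\<tau> h) \<and> \<tau> h \<subseteq> last h" if "h \<noteq> [] \<and> set h \<subseteq> fplus F" for h
    using ws1 that by blast
  have t2: "(\<Union>k. \<tau> (map a [0..<Suc k])) \<in> fstar F" if "\<forall>k. a k \<in> fplus F" for a
    using ws2 that by blast
  define Z where "Z h = (\<Union>X\<in>fplus F. \<tau> (h @ [X]))" for h
  have ZF: "Z h \<in> F" if "set h \<subseteq> fplus F" for h
  proof (rule ccontr)
    assume "Z h \<notin> F"
    then have m: "- Z h \<in> fplus F" by (simp add: fplus_iff)
    have "h @ [- Z h] \<noteq> [] \<and> set (h @ [- Z h]) \<subseteq> fplus F" using that m by auto
    from t1[OF this] have t: "\<tau> (h @ [- Z h]) \<noteq> {} \<and> \<tau> (h @ [- Z h]) \<subseteq> last (h @ [- Z h])" by blast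
    have sub: "\<And>X. X \<in> fplus F \<Longrightarrow> \<tau> (h @ [X]) \<subseteq> Z h" unfolding Z_def by blast
    have "\<tau> (h @ [- Z h]) \<subseteq> Z h" using sub[OF m] .
    moreover have "\<tau> (h @ [- Z h]) \<subseteq> - Z h" using t unfolding last_snoc by blast
    moreover have "\<tau> (h @ [- Z h]) \<noteq> {}" using t by blast
    ultimately show False by blast
  qed
  define g :: "nat set list \<Rightarrow> nat \<Rightarrow> nat set" where
    "g h n = (SOME X. X \<in> fplus F \<and> (n \<in> Z h \<longrightarrow> n \<in> \<tau> (h @ [X])))" for h n
  have gP: "g h n \<in> fplus F \<and> (n \<in> Z h \<longrightarrow> n \<in> \<tau> (h @ [g h n]))" for h n
  proof -
    have "\<exists>X. X \<in> fplus F \<and> (n \<in> Z h \<longrightarrow> n \<in> \<tau> (h @ [X]))"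
    proof (cases "n \<in> Z h")
      case True then show ?thesis unfolding Z_def by blast
    next
      case False then show ?thesis using UNIV_plus[OF pf] by blast
    qed
    then show ?thesis unfolding g_def by (rule someI_ex)
  qed
  have accP: "set (acc g l) \<subseteq> fplus F" for l
    by (induction l rule: rev_induct) (use gP in auto)
  define \<sigma> where "\<sigma> l = Z (acc g l)" for l
  have s1: "\<sigma> l \<in> F" for l unfolding \<sigma>_def using ZF accP by blast
  have s2: "\<not> range b \<in> fplus F" if hb: "\<forall>k. b k \<in> \<sigma> (map b [0..<k])" for b
  proof -
    define a where "a k = g (acc g (map b [0..<k])) (b k)" for k
    have ab: "acc g (map b [0..<k]) = map a [0..<k]" for k unfolding a_def by (rule acc_map)
    have aP: "\<forall>k. a k \<in> fplus F" unfolding a_def using gP by blast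
    have "b k \<in> \<tau> (map a [0..<Suc k])" for k
    proof -
      have "b k \<in> Z (map a [0..<k])" using hb[rule_format, of k] unfolding \<sigma>_def ab .
      then show ?thesis using gP[of "acc g (map b [0..<k])" "b k"] unfolding map_upt_Suc a_def[of k] ab
        by simp
    qed
    then have sub: "range b \<subseteq> (\<Union>k. \<tau> (map a [0..<Suc k]))" by blast
    have "- (\<Union>k. \<tau> (map a [0..<Suc k])) \<in> F" using t2[OF aP] by (simp add: fstar_iff)
    moreover have "- (\<Union>k. \<tau> (map a [0..<Suc k])) \<subseteq> - range b" using sub by blast
    ultimately have "- range b \<in> F" using filt unfolding is_filter_def by blast
    then show ?thesis by (simp add: fplus_iff)
  qed
  show ?thesis unfolding I_wins_pt_def win_I_def using s1 s2 by blast
qed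

theorem theorem2p22:
  fixes F :: "nat set set"
  assumes "proper_filter F"
  shows "(I_wins_fin (fplus F) (fstar F) \<longleftrightarrow> II_wins_pt F (fplus F))
       \<and> (II_wins_fin (fplus F) (fstar F) \<longleftrightarrow> I_wins_pt F (fplus F))
       \<and> (I_wins_fin (fplus F) (fstar F) \<longleftrightarrow> omega_plus_diagonalizable F)
       \<and> (II_wins_fin (fplus F) (fstar F) \<longleftrightarrow> \<not> weakly_Ramsey F)"
proof -
  have a: "I_wins_fin (fplus F) (fstar F) \<longleftrightarrow> II_wins_pt F (fplus F)"
    using L3[OF assms] L4[OF assms] by blast
  have b: "II_wins_fin (fplus F) (fstar F) \<longleftrightarrow> I_wins_pt F (fplus F)"
    using L8[OF assms] L6[OF assms] L7[OF assms] by blast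
  have c: "I_wins_fin (fplus F) (fstar F) \<longleftrightarrow> omega_plus_diagonalizable F"
    using L1[OF assms] L2[OF assms] by blast
  have d: "II_wins_fin (fplus F) (fstar F) \<longleftrightarrow> \<not> weakly_Ramsey F"
    using L8[OF assms] L6[OF assms] L7[OF assms] by blast
  show ?thesis using a b c d by blast
qed

end
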